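(* Let $n\ge1$, $\rho=2n+1$, and let $\nu$ be an integer with $\nu>\rho-2$. Define on $\mathbb R$ \[ \mathbf b_\nu(\lambda)=\begin{cases}\mathbf c_\nu(\lambda)&\text{if }\frac{\nu-\rho+2}2\in\mathbb Z^+,\\ \lambda\,\mathbf c_\nu(\lambda)&\text{if }\frac{\nu-\rho+2}2\notin\mathbb Z^+,\end{cases} \] where $\mathbf c_\nu(\lambda)=2^{\rho-i\lambda}\frac{\Gamma(\rho-1)\Gamma(i\lambda)}{\Gamma(\frac{i\lambda+\nu+\rho}2)\Gamma(\frac{i\lambda+\rho-\nu-2}2)}$ (extended by continuity at $\lambda=0$). Then (i) $\mathbf b_\nu$ has no zero in $\mathbb R$; (ii) there exists $C>0$ such that for all $\lambda\in\mathbb R$, \[ C^{-1}(1+\lambda^2)^{\frac{2\rho-4-\varepsilon(\nu)}4}\le|\mathbf b_\nu(\lambda)|^{-1}\le C(1+\lambda^2)^{\frac{2\rho-4-\varepsilon(\nu)}4}, \] where $\varepsilon(\nu)=1$ if $\frac{\nu-\rho+2}2\notin\mathbb Z^+$ and $\varepsilon(\nu)=-1$ if $\frac{\nu-\rho+2}2\in\mathbb Z^+$.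
   Context: $\mathbb Z^+$ denotes the set of nonnegative integers (under the hypothesis $\nu>\rho-2$ this is equivalent to positive integers here). *)

theory Defs
  imports "HOL-Analysis.Analysis"
begin

definition half_shift_nonneg_int :: "nat \<Rightarrow> int \<Rightarrow> bool" where
  "half_shift_nonneg_int rho nu \<longleftrightarrow> (\<exists>k::nat. nu - int rho + 2 = 2 * int k)"

text \<open>The raw formula c_nu(lambda); meaningful (no poles) for real lambda \<noteq> 0.\<close>
definition c_raw :: "nat \<Rightarrow> int \<Rightarrow> real \<Rightarrow> complex" where
  "c_raw rho nu lam =
     (2::complex) powr (of_nat rho - \<i> * of_real lam) *
     (Gamma (of_nat rho - 1) * Gamma (\<i> * of_real lam)) /
     (Gamma ((\<i> * of_real lam + of_int nu + of_nat rho) / 2) *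
      Gamma ((\<i> * of_real lam + of_nat rho - of_int nu - 2) / 2))"

definition b_raw :: "nat \<Rightarrow> int \<Rightarrow> real \<Rightarrow> complex" where
  "b_raw rho nu lam =
     (if half_shift_nonneg_int rho nu then c_raw rho nu lam
      else of_real lam * c_raw rho nu lam)"

definition b_fun :: "nat \<Rightarrow> int \<Rightarrow> real \<Rightarrow> complex" where
  "b_fun rho nu lam =
     (if lam = 0 then Lim (at (0::real)) (b_raw rho nu) else b_raw rho nu lam)"

definition eps_nu :: "nat \<Rightarrow> int \<Rightarrow> real" where
  "eps_nu rho nu = (if half_shift_nonneg_int rho nu then -1 else 1)"

end

theory Submission
  imports Defs
begin

lemma onepsq_pos [simp]: "(0::real) < 1 + x^2"
  by (simp add: add_pos_nonneg)
lemma onepsq_ne [simp]: "(1::real) + x^2 \<noteq> 0"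
  using onepsq_pos[of x] by linarith

definition bnd :: "(real \<Rightarrow> real) \<Rightarrow> real \<Rightarrow> bool" where
  "bnd f e \<longleftrightarrow> (\<exists>C>0. \<forall>x. inverse C * (1 + x^2) powr e \<le> f x \<and> f x \<le> C * (1 + x^2) powr e)"

lemma bnd_pos: "bnd f e \<Longrightarrow> f x > 0"
proof -
  assume "bnd f e"
  then obtain C where C: "C > 0" "inverse C * (1 + x^2) powr e \<le> f x"
    unfolding bnd_def by blast
  have "inverse C * (1 + x^2) powr e > 0" using C(1) by simp
  then show ?thesis using C(2) by linarith
qed

lemma bnd_mult:
  assumes "bnd f a" "bnd g b"
  shows "bnd (\<lambda>x. f x * g x) (a + b)"
proof -
  obtain C where C: "C > 0" "\<And>x. inverse C * (1 + x^2) powr a \<le> f x \<and> f x \<le> C * (1 + x^2) powr a"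
    using assms(1) unfolding bnd_def by blast
  obtain D where D: "D > 0" "\<And>x. inverse D * (1 + x^2) powr b \<le> g x \<and> g x \<le> D * (1 + x^2) powr b"
    using assms(2) unfolding bnd_def by blast
  show ?thesis unfolding bnd_def
  proof (intro exI[of _ "C*D"] conjI allI)
    show "C * D > 0" using C D by simp
    fix x :: real
    have pa: "(1 + x^2) powr a > 0" "(1 + x^2) powr b > 0" by auto
    have e: "(1 + x^2) powr (a+b) = (1 + x^2) powr a * (1 + x^2) powr b" by (simp add: powr_add)
    have l1: "0 \<le> inverse C * (1 + x^2) powr a" "0 \<le> inverse D * (1 + x^2) powr b" using C D pa by auto
    have "inverse (C*D) * (1 + x^2) powr (a+b) = (inverse C * (1 + x^2) powr a) * (inverse D * (1 + x^2) powr b)"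
      by (simp add: e)
    also have "\<dots> \<le> f x * g x" using C(2)[of x] D(2)[of x] l1 by (intro mult_mono) auto
    finally show "inverse (C*D) * (1 + x^2) powr (a+b) \<le> f x * g x" .
    have "f x * g x \<le> (C * (1 + x^2) powr a) * (D * (1 + x^2) powr b)"
      using C(2)[of x] D(2)[of x] l1 by (intro mult_mono) auto
    also have "\<dots> = C * D * (1 + x^2) powr (a+b)" by (simp add: e)
    finally show "f x * g x \<le> C * D * (1 + x^2) powr (a+b)" .
  qed
qed

lemma bnd_inverse:
  assumes "bnd f a"
  shows "bnd (\<lambda>x. inverse (f x)) (- a)"
proof -
  obtain C where C: "C > 0" "\<And>x. inverse C * (1 + x^2) powr a \<le> f x \<and> f x \<le> C * (1 + x^2) powr a"
    using assms(1) unfolding bnd_def by blast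
  show ?thesis unfolding bnd_def
  proof (intro exI[of _ "C"] conjI allI)
    show "C > 0" using C by simp
    fix x :: real
    have pa: "(1 + x^2) powr a > 0" by auto
    have m: "(1 + x^2) powr (-a) = inverse ((1 + x^2) powr a)" by (simp add: powr_minus)
    have p1: "inverse C * (1 + x^2) powr a > 0" using C pa by auto
    have fx: "f x > 0" using p1 C(2)[of x] by linarith
    show "inverse C * (1 + x^2) powr (-a) \<le> inverse (f x)"
      using le_imp_inverse_le[OF conjunct2[OF C(2)[of x]] fx] C pa
      by (simp add: m mult.commute)
    show "inverse (f x) \<le> C * (1 + x^2) powr (-a)"
      using le_imp_inverse_le[OF conjunct1[OF C(2)[of x]] p1] C pa
      by (simp add: m mult.commute)
  qed
qed

lemma bnd_const: "c > 0 \<Longrightarrow> bnd (\<lambda>x. c) 0"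
  unfolding bnd_def
proof (intro exI[of _ "max c (inverse c)"] conjI allI)
  assume c: "c > 0"
  show "max c (inverse c) > 0" using c by simp
  fix x :: real
  show "inverse (max c (inverse c)) * (1 + x^2) powr 0 \<le> c"
    using c by (auto simp: max_def)
  show "c \<le> max c (inverse c) * (1 + x^2) powr 0" by simp
qed

lemma bnd_sqrt:
  assumes "bnd f a"
  shows "bnd (\<lambda>x. sqrt (f x)) (a / 2)"
proof -
  obtain C where C: "C > 0" "\<And>x. inverse C * (1 + x^2) powr a \<le> f x \<and> f x \<le> C * (1 + x^2) powr a"
    using assms(1) unfolding bnd_def by blast
  show ?thesis unfolding bnd_def
  proof (intro exI[of _ "sqrt C"] conjI allI)
    show "sqrt C > 0" using C by simp
    fix x :: real
    have s: "sqrt ((1 + x^2) powr a) = (1 + x^2) powr (a/2)"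
      by (simp add: sqrt_def powr_powr[symmetric] root_powr_inverse powr_powr) 
    have "inverse (sqrt C) * (1 + x^2) powr (a/2) = sqrt (inverse C * (1 + x^2) powr a)"
      by (simp add: real_sqrt_mult s real_sqrt_inverse)
    also have "\<dots> \<le> sqrt (f x)" using C(2)[of x] by (simp)
    finally show "inverse (sqrt C) * (1 + x^2) powr (a/2) \<le> sqrt (f x)" .
    have "sqrt (f x) \<le> sqrt (C * (1 + x^2) powr a)" using C(2)[of x] by simp
    also have "\<dots> = sqrt C * (1 + x^2) powr (a/2)" by (simp add: real_sqrt_mult s)
    finally show "sqrt (f x) \<le> sqrt C * (1 + x^2) powr (a/2)" .
  qed
qed

lemma bnd_cong: "bnd f a \<Longrightarrow> (\<And>x. f x = g x) \<Longrightarrow> a = b \<Longrightarrow> bnd g b"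
  by (metis ext)


lemma imag_not_nonpos_int:
  fixes y c :: real
  assumes "c \<notin> \<int>\<^sub>\<le>\<^sub>0 \<or> y \<noteq> 0"
  shows "complex_of_real c + \<i> * of_real y \<notin> \<int>\<^sub>\<le>\<^sub>0"
proof
  assume "complex_of_real c + \<i> * of_real y \<in> \<int>\<^sub>\<le>\<^sub>0"
  then obtain k :: int where k: "k \<le> 0" "complex_of_real c + \<i> * of_real y = of_int k"
    by (auto elim: nonpos_Ints_cases)
  then have "y = 0" "c = of_int k" by (auto simp: complex_eq_iff)
  with assms k nonpos_Ints_of_int[of k] show False by auto
qed

lemma norm_Gamma_half:
  fixes y :: real
  shows "norm (Gamma (1/2 + \<i> * of_real y))^2 = pi / ((exp (pi*y) + inverse (exp (pi*y))) / 2)"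
proof -
  let ?w = "1/2 + \<i> * complex_of_real y"
  have c: "cnj (Gamma ?w) = Gamma (1 - ?w)" by (simp add: cnj_Gamma)
  have "complex_of_real (norm (Gamma ?w)^2) = Gamma ?w * Gamma (1 - ?w)"
    unfolding complex_norm_square c ..
  also have "\<dots> = of_real pi / sin (of_real pi * ?w)" by (rule Gamma_reflection_complex)
  also have "sin (of_real pi * ?w) = cos (\<i> * of_real (pi * y))"
    by (simp add: sin_add distrib_left mult.commute mult.left_commute)
  also have "\<dots> = of_real ((exp (pi*y) + inverse (exp (pi*y))) / 2)"
    by (rule cosh_real[symmetric])
  finally show ?thesis
    by (metis of_real_divide of_real_eq_iff)
qed

lemma norm_Gamma_one:
  fixes y :: real
  assumes "y \<noteq> 0"
  shows "norm (Gamma (1 + \<i> * of_real y))^2 = pi * y / ((exp (pi*y) - inverse (exp (pi*y))) / 2)"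
proof -
  let ?w = "\<i> * complex_of_real y"
  have nz: "?w \<notin> \<int>\<^sub>\<le>\<^sub>0" using imag_not_nonpos_int[of 0 y] assms by simp
  have c: "cnj (Gamma (1 + ?w)) = Gamma (1 - ?w)" by (simp add: cnj_Gamma)
  have g1: "Gamma (1 + ?w) = ?w * Gamma ?w" using Gamma_plus1[OF nz] by (simp add: add.commute)
  have "complex_of_real (norm (Gamma (1 + ?w))^2) = Gamma (1 + ?w) * Gamma (1 - ?w)"
    unfolding complex_norm_square c ..
  also have "\<dots> = ?w * (Gamma ?w * Gamma (1 - ?w))" by (simp add: g1)
  also have "Gamma ?w * Gamma (1 - ?w) = of_real pi / sin (of_real pi * ?w)" by (rule Gamma_reflection_complex)
  also have "sin (of_real pi * ?w) = \<i> * of_real ((exp (pi*y) - inverse (exp (pi*y))) / 2)"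
  proof -
    have "sin (of_real pi * ?w) = sin (\<i> * of_real (pi*y))" by (simp add: mult.commute mult.left_commute)
    also have "\<dots> = \<i> * of_real ((exp (pi*y) - inverse (exp (pi*y))) / 2)"
      by (subst sinh_real) simp
    finally show ?thesis .
  qed
  also have "?w * (of_real pi / (\<i> * of_real ((exp (pi*y) - inverse (exp (pi*y))) / 2))) =
     of_real (pi * y / ((exp (pi*y) - inverse (exp (pi*y))) / 2))"
  proof -
    define S where "S = (exp (pi*y) - inverse (exp (pi*y))) / 2"
    have "?w * (of_real pi / (\<i> * of_real S)) = of_real (pi * y / S)"
      by (cases "S = 0") (simp_all add: field_simps)
    then show ?thesis unfolding S_def .
  qed
  finally have "complex_of_real (norm (Gamma (1 + ?w))^2) = of_real (pi * y / ((exp (pi*y) - inverse (exp (pi*y))) / 2))" .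
  then show ?thesis by (metis of_real_eq_iff)
qed


lemma coth_bounds:
  fixes t :: real
  assumes t: "t > 0"
  defines "S \<equiv> (exp t - inverse (exp t)) / 2" and "H \<equiv> (exp t + inverse (exp t)) / 2"
  shows "S > 0" "t \<le> t * H / S" "t * H / S \<le> 1 + t" "1/2 \<le> t * H / S"
proof -
  have e1: "exp t > 1" using t by simp
  have ie: "inverse (exp t) < 1" "inverse (exp t) > 0" using e1 by (auto simp: inverse_less_1_iff)
  have gen: "\<And>a b::real. 1 < a \<Longrightarrow> b < 1 \<Longrightarrow> 0 < (a - b)/2" by simp
  show S: "S > 0" unfolding S_def using gen[OF e1 ie(1)] .
  have HS: "S \<le> H" unfolding S_def H_def using ie by simp
  show "t \<le> t * H / S" using S HS t by (simp add: field_simps)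
  have e2: "exp t * exp t \<ge> 1 + 2*t" using exp_ge_add_one_self[of "2*t"] by (simp add: exp_add[symmetric])
  have "t * H \<le> (1 + t) * S"
  proof -
    have "2 * exp t * (t * H) = t * (exp t * exp t + 1)" unfolding H_def using e1 by (simp add: field_simps)
    also have "\<dots> \<le> (1 + t) * (exp t * exp t - 1)" using e2 by (simp add: algebra_simps)
    also have "\<dots> = 2 * exp t * ((1 + t) * S)" unfolding S_def using e1 by (simp add: field_simps)
    finally show ?thesis using e1 by simp
  qed
  then show "t * H / S \<le> 1 + t" using S by (simp add: divide_le_eq)
  show "1/2 \<le> t * H / S"
  proof (cases "t \<ge> 1/2")
    case True
    then show ?thesis using \<open>t \<le> t * H / S\<close> by linarith
  next
    case False
    have a: "inverse (exp t) \<ge> 1 - t" using exp_ge_add_one_self[of "-t"] by (simp add: exp_minus)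
    have b: "exp t * (1 - t) \<le> 1" using a e1 by (simp add: field_simps)
    have c: "exp t \<le> 1 + 2 * t"
    proof -
      have q1: "(1 + 2*t) * (1 - t) = 1 + t * (1 - 2*t)" by (simp add: algebra_simps)
      have q2: "t * (1 - 2*t) \<ge> 0" using False t by (intro mult_nonneg_nonneg) auto
      have "exp t * (1 - t) \<le> (1 + 2*t) * (1 - t)" using b q1 q2 by linarith
      then show ?thesis using False by (simp add: mult_le_cancel_right)
    qed
    have S3: "S \<le> 3 * t / 2" unfolding S_def using a c by simp
    have gen2: "\<And>a b::real. a \<ge> 1 + t \<Longrightarrow> b \<ge> 1 - t \<Longrightarrow> 1 \<le> (a + b)/2" by simp
    have H1: "H \<ge> 1" unfolding H_def using gen2[OF exp_ge_add_one_self a] .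
    have "t * H / S \<ge> t / S" using H1 S t by (simp add: divide_right_mono)
    moreover have "t / S \<ge> t / (3 * t / 2)" using S3 S t by (intro divide_left_mono) auto
    moreover have "t / (3 * t / 2) = 2/3" using t by simp
    ultimately show ?thesis by linarith
  qed
qed


definition Qf :: "real \<Rightarrow> real" where
  "Qf y = norm (Gamma (1 + \<i> * of_real y))^2 / norm (Gamma (1/2 + \<i> * of_real y))^2"

lemma Qf_sym: "Qf (-y) = Qf y"
proof -
  have a: "Gamma (1 + \<i> * of_real (-y)) = cnj (Gamma (1 + \<i> * of_real y))"
    by (simp add: cnj_Gamma)
  have b: "Gamma (1/2 + \<i> * of_real (-y)) = cnj (Gamma (1/2 + \<i> * of_real y))"
    by (simp add: cnj_Gamma)
  show ?thesis unfolding Qf_def a b complex_mod_cnj ..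
qed

lemma Qf_pos:
  assumes y: "y > 0"
  shows "Qf y = (pi * y) * ((exp (pi*y) + inverse (exp (pi*y))) / 2) / ((exp (pi*y) - inverse (exp (pi*y))) / 2) / pi"
proof -
  have yne: "y \<noteq> 0" using y by simp
  have "pi * y > 0" using y by simp
  note cb = coth_bounds[OF this]
  have H: "(exp (pi*y) + inverse (exp (pi*y))) / 2 > 0"
    by (simp add: add_pos_pos)
  show ?thesis unfolding Qf_def norm_Gamma_half norm_Gamma_one[OF yne]
    using cb(1) H by (simp add: field_simps)
qed

lemma Qf_bounds:
  "max (1/(2*pi)) \<bar>y\<bar> \<le> Qf y \<and> Qf y \<le> 1/pi + \<bar>y\<bar>"
proof -
  have pos: "max (1/(2*pi)) y \<le> Qf y \<and> Qf y \<le> 1/pi + y" if y: "y > 0" for y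
  proof -
    have "pi * y > 0" using y by simp
    note cb = coth_bounds[OF this]
    define K where "K = (pi * y) * ((exp (pi*y) + inverse (exp (pi*y))) / 2) / ((exp (pi*y) - inverse (exp (pi*y))) / 2)"
    have Q: "Qf y = K / pi" unfolding K_def using Qf_pos[OF y] by simp
    have k1: "pi * y \<le> K" "K \<le> 1 + pi * y" "1/2 \<le> K" using cb(2-4) unfolding K_def by auto
    have "y \<le> K / pi" using k1(1) by (simp add: field_simps)
    moreover have "1/(2*pi) \<le> K / pi" using k1(3) by (simp add: field_simps)
    moreover have "K / pi \<le> 1/pi + y" using k1(2) by (simp add: field_simps)
    ultimately show ?thesis unfolding Q by simp
  qed
  have z: "Qf 0 = 1/pi"
    unfolding Qf_def using norm_Gamma_half[of 0] by simp
  show ?thesis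
  proof (cases "y > 0")
    case True then show ?thesis using pos[of y] by simp
  next
    case False
    show ?thesis
    proof (cases "y = 0")
      case True
      have "1/(2*pi) \<le> 1/pi" by (simp add: field_simps)
      then show ?thesis using True z by simp
    next
      case False
      then have "-y > 0" using \<open>\<not> y > 0\<close> by simp
      then show ?thesis using pos[of "-y"] Qf_sym[of y] \<open>\<not> y > 0\<close> by simp
    qed
  qed
qed

lemma lin_helper: "2 * a \<le> b + 1 \<Longrightarrow> 0 \<le> b \<Longrightarrow> 1 + 2 * a + b \<le> 4 * (1 + (b::real))"
  by simp

lemma sqrt_bounds: "sqrt (1 + x^2) \<le> 1 + \<bar>x\<bar>" "1 + \<bar>x\<bar> \<le> 2 * sqrt (1 + x^2)"
proof -
  show "sqrt (1 + x^2) \<le> 1 + \<bar>x\<bar>"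
    by (rule real_le_lsqrt) (auto simp: power2_eq_square algebra_simps)
  define a where "a = \<bar>x\<bar>"
  have xa: "x^2 = a^2" unfolding a_def by simp
  have sq: "(a - 1)^2 \<ge> 0" by simp
  have e1: "(a - 1)^2 = a^2 - 2 * a + 1" by (simp add: power2_eq_square algebra_simps)
  have e2: "(1 + a)^2 = 1 + 2 * a + a^2" by (simp add: power2_eq_square algebra_simps)
  have e3: "(2 * sqrt (1 + x^2))^2 = 4 * (1 + a^2)" by (simp add: power_mult_distrib xa)
  have "(1 + a)^2 \<le> (2 * sqrt (1 + x^2))^2" unfolding e2 e3
  proof -
    have h: "2 * a \<le> a^2 + 1" using sq unfolding e1 by simp
    have h2: "0 \<le> a^2" by simp
    from lin_helper[OF h h2] show "1 + 2 * a + a^2 \<le> 4 * (1 + a^2)" .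
  qed
  then have "(1 + \<bar>x\<bar>)^2 \<le> (2 * sqrt (1 + x^2))^2" unfolding a_def .
  then show "1 + \<bar>x\<bar> \<le> 2 * sqrt (1 + x^2)"
    by (rule power2_le_imp_le) simp
qed

lemma bnd_Qf: "bnd (\<lambda>x. Qf (x/2)) (1/2)"
  unfolding bnd_def
proof (intro exI[of _ "4*pi"] conjI allI)
  show "4 * pi > 0" by simp
  fix x :: real
  have p: "(1 + x^2) powr (1/2) = sqrt (1 + x^2)" by (simp add: powr_half_sqrt)
  note qb = Qf_bounds[of "x/2"]
  note sb = sqrt_bounds[of x]
  have pi1: "pi \<ge> 1" using pi_gt3 by simp
  have "inverse (4*pi) * sqrt (1 + x^2) \<le> (1 + \<bar>x\<bar>) / (4*pi)"
    using sb(1) by (simp add: field_simps)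
  also have "\<dots> \<le> 1/(4*pi) + \<bar>x\<bar>/4" using pi1 mult_right_mono[OF pi1 abs_ge_zero[of x]] by (simp add: field_simps)
  also have "\<dots> \<le> max (1/(2*pi)) \<bar>x/2\<bar>" by (simp add: max_def field_simps)
  also have "\<dots> \<le> Qf (x/2)" using qb by simp
  finally show "inverse (4*pi) * (1 + x^2) powr (1/2) \<le> Qf (x/2)" unfolding p .
  have "Qf (x/2) \<le> 1/pi + \<bar>x\<bar>/2" using qb by simp
  also have "\<dots> \<le> 1 + \<bar>x\<bar>"
  proof -
    have "1/pi \<le> 1" using pi1 by simp
    then show ?thesis by linarith
  qed
  also have "\<dots> \<le> 2 * sqrt (1 + x^2)" by (rule sb(2))
  also have "\<dots> \<le> 4 * pi * sqrt (1 + x^2)" using pi1 by (intro mult_right_mono) auto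
  finally show "Qf (x/2) \<le> 4 * pi * (1 + x^2) powr (1/2)" unfolding p .
qed

definition Rg :: "real \<Rightarrow> real" where
  "Rg x = norm (Gamma (1 + \<i> * of_real (x/2))) / norm (Gamma (1/2 + \<i> * of_real (x/2)))"

lemma bnd_Rg: "bnd Rg (1/4)"
proof -
  have "bnd (\<lambda>x. sqrt (Qf (x/2))) ((1/2)/2)" by (rule bnd_sqrt[OF bnd_Qf])
  then show ?thesis
    by (rule bnd_cong) (simp_all add: Rg_def Qf_def real_sqrt_divide)
qed


lemma bnd_quad:
  fixes d :: real
  assumes "d \<noteq> 0"
  shows "bnd (\<lambda>x. d^2 + (x/2)^2) 1"
proof -
  define m where "m = min (d^2) (1/4)"
  define M where "M = max (d^2) (1/4)"
  have m: "m > 0" unfolding m_def using assms by simp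
  have M: "M \<ge> d^2" "M \<ge> 1/4" unfolding M_def by auto
  have mm: "m \<le> d^2" "m \<le> 1/4" unfolding m_def by auto
  show ?thesis unfolding bnd_def
  proof (intro exI[of _ "M + inverse m"] conjI allI)
    show "M + inverse m > 0" using m M by (simp add: add_nonneg_pos)
    fix x :: real
    have p: "(1 + x^2) powr 1 = 1 + x^2" by simp
    have x2: "(x/2)^2 = x^2 / 4" by (simp add: power_divide)
    have "inverse (M + inverse m) \<le> m"
    proof -
      have "inverse m \<le> M + inverse m" using M by simp
      then have "inverse (M + inverse m) \<le> inverse (inverse m)"
        using m by (intro le_imp_inverse_le) auto
      then show ?thesis by simp
    qed
    then have "inverse (M + inverse m) * (1 + x^2) \<le> m * (1 + x^2)"
      by (intro mult_right_mono) auto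
    also have "m * (1 + x^2) = m + m * x^2" by (simp add: algebra_simps)
    also have "\<dots> \<le> d^2 + (x/2)^2"
      unfolding x2 using mm mult_right_mono[OF mm(2) zero_le_power2[of x]] by simp
    finally show "inverse (M + inverse m) * (1 + x^2) powr 1 \<le> d^2 + (x/2)^2" unfolding p .
    have "d^2 + (x/2)^2 \<le> M + M * x^2"
      unfolding x2 using M mult_right_mono[OF M(2) zero_le_power2[of x]] by simp
    also have "\<dots> = M * (1 + x^2)" by (simp add: algebra_simps)
    also have "\<dots> \<le> (M + inverse m) * (1 + x^2)"
      using m by (intro mult_right_mono) auto
    finally show "d^2 + (x/2)^2 \<le> (M + inverse m) * (1 + x^2) powr 1" unfolding p .
  qed
qed

lemma norm_re_im: "norm (complex_of_real a + \<i> * of_real b) = sqrt (a^2 + b^2)"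
  by (simp add: norm_complex_def)

lemma bnd_poch:
  fixes c :: real
  assumes "\<forall>j<k. c + real j \<noteq> 0"
  shows "bnd (\<lambda>x. norm (pochhammer (complex_of_real c + \<i> * of_real (x/2)) k)) (real k / 2)"
  using assms
proof (induction k)
  case 0
  show ?case using bnd_const[of 1] by simp
next
  case (Suc k)
  have ih: "bnd (\<lambda>x. norm (pochhammer (complex_of_real c + \<i> * of_real (x/2)) k)) (real k / 2)"
    using Suc by simp
  have d: "c + real k \<noteq> 0" using Suc.prems by simp
  have q: "bnd (\<lambda>x. sqrt ((c + real k)^2 + (x/2)^2)) (1/2)"
    using bnd_sqrt[OF bnd_quad[OF d]] by simp
  have e: "norm (pochhammer (complex_of_real c + \<i> * of_real (x/2)) (Suc k)) =
     norm (pochhammer (complex_of_real c + \<i> * of_real (x/2)) k) * sqrt ((c + real k)^2 + (x/2)^2)" for x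
  proof -
    have "complex_of_real c + \<i> * of_real (x/2) + of_nat k = complex_of_real (c + real k) + \<i> * of_real (x/2)"
      by simp
    then show ?thesis by (simp only: pochhammer_Suc norm_mult norm_re_im)
  qed
  show ?case
  proof (rule bnd_cong[OF bnd_mult[OF ih q]])
    show "\<And>x. norm (pochhammer (complex_of_real c + \<i> * of_real (x/2)) k) * sqrt ((c + real k)^2 + (x/2)^2) =
      norm (pochhammer (complex_of_real c + \<i> * of_real (x/2)) (Suc k))" by (simp only: e)
    show "real k / 2 + 1 / 2 = real (Suc k) / 2" by (simp add: field_simps)
  qed
qed


lemma aux_cancel:
  fixes s a b g :: complex
  assumes "s \<noteq> 0" "a * b = 1"
  shows "a * (b * s * g) / s = g"
proof -
  have "a * (b * s * g) / s = (a * b) * ((s * g) / s)" by (simp add: mult.assoc)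
  also have "\<dots> = g" using assms by simp
  finally show ?thesis .
qed

lemma dup2:
  fixes z :: complex
  assumes "z + 1/2 \<notin> \<int>\<^sub>\<le>\<^sub>0" "z + 1 \<notin> \<int>\<^sub>\<le>\<^sub>0"
  shows "Gamma (2*z + 1) = exp (2*z * of_real (ln 2)) * Gamma (z + 1/2) * Gamma (z + 1) / of_real (sqrt pi)"
proof -
  have a: "z + 1/2 + 1/2 = z + 1" by simp
  have e0: "Gamma (z + 1/2) * Gamma (z + 1) = exp ((1 - 2*(z + 1/2)) * of_real (ln 2)) * of_real (sqrt pi) * Gamma (2*(z+1/2))"
    using Gamma_legendre_duplication[of "z + 1/2"] assms a by simp
  have h2: "2*(z+1/2) = 2*z + 1" by (simp add: algebra_simps)
  have h1: "1 - (2*z + 1) = - (2*z)" by (simp add: algebra_simps)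
  have e: "Gamma (z + 1/2) * Gamma (z + 1) = exp (- (2*z) * of_real (ln 2)) * of_real (sqrt pi) * Gamma (2*z + 1)"
    using e0 unfolding h2 h1 .
  have ne: "complex_of_real (sqrt pi) \<noteq> 0" by auto
  have ee: "exp (2*z * of_real (ln 2)) * exp (- (2*z) * of_real (ln 2)) = 1"
    by (simp add: exp_add[symmetric])
  have "exp (2*z * of_real (ln 2)) * Gamma (z + 1/2) * Gamma (z + 1) / of_real (sqrt pi)
      = exp (2*z * of_real (ln 2)) * (Gamma (z + 1/2) * Gamma (z + 1)) / of_real (sqrt pi)"
    by (simp only: mult.assoc)
  also have "\<dots> = Gamma (2*z + 1)" unfolding e by (rule aux_cancel[OF ne ee])
  finally show ?thesis by simp
qed

lemma powr_two_split:
  "(2::complex) powr (of_nat r - w) * exp (w * of_real (ln 2)) = 2 powr of_nat r"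
proof -
  have l: "Ln (2::complex) = of_real (ln 2)" by (simp add: Ln_of_real[symmetric])
  show ?thesis unfolding powr_def l by (simp add: exp_add[symmetric] algebra_simps)
qed


definition G_odd :: "nat \<Rightarrow> nat \<Rightarrow> real \<Rightarrow> complex" where
  "G_odd n p x = (2::complex) powr of_nat (2*n+1) * Gamma (of_nat (2*n+1) - 1) *
     Gamma (1/2 + \<i> * of_real (x/2)) * pochhammer (of_real (- real p) + \<i> * of_real (x/2)) p /
     (2 * of_real (sqrt pi) * Gamma (1 + \<i> * of_real (x/2)) * pochhammer (1 + \<i> * of_real (x/2)) (2*n+p-1))"

lemma odd_eq:
  assumes n: "n \<ge> 1" and p: "p \<ge> 1" and x: "x \<noteq> 0"
  shows "c_raw (2*n+1) (2*int n + 2*int p - 1) x = G_odd n p x"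
proof -
  define z where "z = \<i> * complex_of_real (x/2)"
  define K where "K = Gamma (of_nat (2*n+1) - 1 :: complex)"
  define A where "A = Gamma (z + 1)"
  define B where "B = Gamma (z + 1/2)"
  define P1 where "P1 = pochhammer (z - of_nat p) p"
  define P2 where "P2 = pochhammer (z + 1) (2*n+p-1)"
  define E where "E = exp (2*z * of_real (ln 2))"
  define Gm where "Gm = Gamma (z - of_nat p)"
  have notint: "complex_of_real c + \<i> * of_real (x/2) \<notin> \<int>\<^sub>\<le>\<^sub>0" for c
    using imag_not_nonpos_int[of c "x/2"] x by simp
  have zn: "z \<notin> \<int>\<^sub>\<le>\<^sub>0" using notint[of 0] unfolding z_def by simp
  have z1: "z + 1 \<notin> \<int>\<^sub>\<le>\<^sub>0" using notint[of 1] unfolding z_def by (simp add: add.commute)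
  have z12: "z + 1/2 \<notin> \<int>\<^sub>\<le>\<^sub>0" using notint[of "1/2"] unfolding z_def by (simp add: add.commute)
  have zp: "z - of_nat p \<notin> \<int>\<^sub>\<le>\<^sub>0" using notint[of "- real p"] unfolding z_def by (simp add: add.commute)
  have z2: "2*z \<notin> \<int>\<^sub>\<le>\<^sub>0" using notint[of 0] x unfolding z_def
    using imag_not_nonpos_int[of 0 x] by simp
  have z0: "z \<noteq> 0" unfolding z_def using x by simp
  have A0: "A \<noteq> 0" unfolding A_def using z1 by (simp add: Gamma_eq_zero_iff)
  have Gm0: "Gm \<noteq> 0" unfolding Gm_def using zp by (simp add: Gamma_eq_zero_iff)
  have E0: "E \<noteq> 0" unfolding E_def by simp
  have f1: "(\<i> * complex_of_real x + of_int (2*int n + 2*int p - 1) + of_nat (2*n+1)) / 2 = z + of_nat (2*n+p)"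
    unfolding z_def by (simp add: field_simps)
  have f2: "(\<i> * complex_of_real x + of_nat (2*n+1) - of_int (2*int n + 2*int p - 1) - 2) / 2 = z - of_nat p"
    unfolding z_def by (simp add: field_simps)
  have f3: "\<i> * complex_of_real x = 2 * z" unfolding z_def by (simp add: field_simps)
  have g1: "Gamma (2*z) = Gamma (2*z + 1) / (2*z)"
    using Gamma_plus1[OF z2] z0 by (simp add: field_simps)
  have g2: "Gamma (2*z + 1) = E * B * A / of_real (sqrt pi)"
    unfolding E_def A_def B_def by (rule dup2[OF z12 z1])
  have g3: "Gamma (z + of_nat (2*n+p)) = A * P2"
  proof -
    have eq: "z + 1 + of_nat (2*n+p-1) = z + of_nat (2*n+p)" using p by simp
    have "P2 = Gamma (z + of_nat (2*n+p)) / A"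
      using pochhammer_Gamma[OF z1, of "2*n+p-1"] unfolding eq P2_def A_def .
    then show ?thesis using A0 by (simp add: field_simps)
  qed
  have g4: "A = Gm * P1 * z"
  proof -
    have "pochhammer (z - of_nat p) (Suc p) = Gamma (z - of_nat p + of_nat (Suc p)) / Gm"
      unfolding Gm_def by (rule pochhammer_Gamma[OF zp])
    moreover have "z - of_nat p + of_nat (Suc p) = z + 1" by simp
    moreover have "pochhammer (z - of_nat p) (Suc p) = P1 * z"
      unfolding P1_def pochhammer_Suc by simp
    ultimately show ?thesis unfolding A_def using Gm0 by (simp add: field_simps)
  qed
  have pw: "(2::complex) powr (of_nat (2*n+1) - 2*z) * E = 2 powr of_nat (2*n+1)"
    unfolding E_def using powr_two_split[of "2*n+1" "2*z"] by simp
  have lhs: "c_raw (2*n+1) (2*int n + 2*int p - 1) x =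
     2 powr (of_nat (2*n+1) - 2*z) * (K * (Gamma (2*z + 1) / (2*z))) / ((A * P2) * Gm)"
    unfolding c_raw_def
    unfolding f1 f2
    unfolding f3 g1 g3 K_def Gm_def ..
  have zq: "z + of_nat (2*n+p) \<notin> \<int>\<^sub>\<le>\<^sub>0"
    using notint[of "real (2*n+p)"] unfolding z_def by (simp add: add.commute)
  have P20: "P2 \<noteq> 0" using g3 zq by (auto simp: Gamma_eq_zero_iff)
  have P10: "P1 \<noteq> 0" using g4 A0 by auto
  have Gm': "Gm = A / (P1 * z)" using g4 P10 z0 by (simp add: field_simps)
  have pw': "(2::complex) powr (of_nat (2*n+1) - 2*z) = 2 powr of_nat (2*n+1) / E"
    using pw E0 by (simp add: field_simps)
  have r1: "Gamma (1/2 + \<i> * complex_of_real (x/2)) = B" unfolding B_def z_def by (simp add: add.commute)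
  have r2: "pochhammer (complex_of_real (- real p) + \<i> * complex_of_real (x/2)) p = P1"
    unfolding P1_def z_def by (simp add: add.commute)
  have r3: "Gamma (1 + \<i> * complex_of_real (x/2)) = A" unfolding A_def z_def by (simp add: add.commute)
  have r4: "pochhammer (1 + \<i> * complex_of_real (x/2)) (2*n+p-1) = P2" unfolding P2_def z_def by (simp add: add.commute)
  have rhs: "G_odd n p x = 2 powr of_nat (2*n+1) * K * B * P1 / (2 * of_real (sqrt pi) * A * P2)"
    unfolding G_odd_def r1 r2 r3 r4 K_def ..
  have sp: "complex_of_real (sqrt pi) \<noteq> 0" by simp
  show ?thesis unfolding lhs rhs g2 Gm' pw'
    using E0 A0 P10 P20 z0 sp by (simp add: field_simps)
qed


definition G_even :: "nat \<Rightarrow> nat \<Rightarrow> real \<Rightarrow> complex" where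
  "G_even n p x = - \<i> * (2::complex) powr of_nat (2*n+1) * Gamma (of_nat (2*n+1) - 1) *
     Gamma (1 + \<i> * of_real (x/2)) * pochhammer (of_real (- 1/2 - real p) + \<i> * of_real (x/2)) (Suc p) /
     (of_real (sqrt pi) * Gamma (1/2 + \<i> * of_real (x/2)) * pochhammer (of_real (1/2) + \<i> * of_real (x/2)) (2*n+p))"

lemma even_eq:
  assumes n: "n \<ge> 1" and x: "x \<noteq> 0"
  shows "of_real x * c_raw (2*n+1) (2*int n + 2*int p) x = G_even n p x"
proof -
  define z where "z = \<i> * complex_of_real (x/2)"
  define K where "K = Gamma (of_nat (2*n+1) - 1 :: complex)"
  define A where "A = Gamma (z + 1)"
  define B where "B = Gamma (z + 1/2)"
  define P1 where "P1 = pochhammer (z - 1/2 - of_nat p) (Suc p)"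
  define P2 where "P2 = pochhammer (z + 1/2) (2*n+p)"
  define E where "E = exp (2*z * of_real (ln 2))"
  define Gm where "Gm = Gamma (z - 1/2 - of_nat p)"
  have notint: "complex_of_real c + \<i> * of_real (x/2) \<notin> \<int>\<^sub>\<le>\<^sub>0" for c
    using imag_not_nonpos_int[of c "x/2"] x by simp
  have z1: "z + 1 \<notin> \<int>\<^sub>\<le>\<^sub>0" using notint[of 1] unfolding z_def by (simp add: add.commute)
  have z12: "z + 1/2 \<notin> \<int>\<^sub>\<le>\<^sub>0" using notint[of "1/2"] unfolding z_def by (simp add: add.commute)
  have eqz: "z - 1/2 - of_nat p = complex_of_real (- 1/2 - real p) + \<i> * of_real (x/2)"
    unfolding z_def by (simp add: algebra_simps)
  have zp: "z - 1/2 - of_nat p \<notin> \<int>\<^sub>\<le>\<^sub>0" unfolding eqz by (rule notint)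
  have z2: "2*z \<notin> \<int>\<^sub>\<le>\<^sub>0" unfolding z_def
    using imag_not_nonpos_int[of 0 x] x by simp
  have z0: "z \<noteq> 0" unfolding z_def using x by simp
  have A0: "A \<noteq> 0" unfolding A_def using z1 by (simp add: Gamma_eq_zero_iff)
  have B0: "B \<noteq> 0" unfolding B_def using z12 by (simp add: Gamma_eq_zero_iff)
  have Gm0: "Gm \<noteq> 0" unfolding Gm_def using zp by (simp add: Gamma_eq_zero_iff)
  have E0: "E \<noteq> 0" unfolding E_def by simp
  have f1: "(\<i> * complex_of_real x + of_int (2*int n + 2*int p) + of_nat (2*n+1)) / 2 = z + 1/2 + of_nat (2*n+p)"
    unfolding z_def by (simp add: field_simps)
  have f2: "(\<i> * complex_of_real x + of_nat (2*n+1) - of_int (2*int n + 2*int p) - 2) / 2 = z - 1/2 - of_nat p"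
    unfolding z_def by (simp add: field_simps)
  have f3: "\<i> * complex_of_real x = 2 * z" unfolding z_def by (simp add: field_simps)
  have fx: "complex_of_real x = - 2 * \<i> * z" unfolding z_def by (simp add: field_simps)
  have g1: "Gamma (2*z) = Gamma (2*z + 1) / (2*z)"
    using Gamma_plus1[OF z2] z0 by (simp add: field_simps)
  have g2: "Gamma (2*z + 1) = E * B * A / of_real (sqrt pi)"
    unfolding E_def A_def B_def by (rule dup2[OF z12 z1])
  have g3: "Gamma (z + 1/2 + of_nat (2*n+p)) = B * P2"
  proof -
    have "P2 = Gamma (z + 1/2 + of_nat (2*n+p)) / B"
      using pochhammer_Gamma[OF z12, of "2*n+p"] unfolding P2_def B_def .
    then show ?thesis using B0 by (simp add: field_simps)
  qed
  have g4: "B = Gm * P1"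
  proof -
    have "P1 = Gamma (z - 1/2 - of_nat p + of_nat (Suc p)) / Gm"
      unfolding Gm_def P1_def by (rule pochhammer_Gamma[OF zp])
    moreover have "z - 1/2 - of_nat p + of_nat (Suc p) = z + 1/2" by simp
    ultimately show ?thesis unfolding B_def using Gm0 by (simp add: field_simps)
  qed
  have pw: "(2::complex) powr (of_nat (2*n+1) - 2*z) * E = 2 powr of_nat (2*n+1)"
    unfolding E_def using powr_two_split[of "2*n+1" "2*z"] by simp
  have lhs: "c_raw (2*n+1) (2*int n + 2*int p) x =
     2 powr (of_nat (2*n+1) - 2*z) * (K * (Gamma (2*z + 1) / (2*z))) / ((B * P2) * Gm)"
    unfolding c_raw_def
    unfolding f1 f2
    unfolding f3 g1 g3 K_def Gm_def ..
  have zq: "z + 1/2 + of_nat (2*n+p) \<notin> \<int>\<^sub>\<le>\<^sub>0"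
    using notint[of "1/2 + real (2*n+p)"] unfolding z_def by (simp add: add.commute add.left_commute)
  have P20: "P2 \<noteq> 0" using g3 zq by (auto simp: Gamma_eq_zero_iff)
  have P10: "P1 \<noteq> 0" using g4 B0 by auto
  have Gm': "Gm = B / P1" using g4 P10 by (simp add: field_simps)
  have pw': "(2::complex) powr (of_nat (2*n+1) - 2*z) = 2 powr of_nat (2*n+1) / E"
    using pw E0 by (simp add: field_simps)
  have r1: "Gamma (1/2 + \<i> * complex_of_real (x/2)) = B" unfolding B_def z_def by (simp add: add.commute)
  have r2: "pochhammer (complex_of_real (- 1/2 - real p) + \<i> * complex_of_real (x/2)) (Suc p) = P1"
    unfolding P1_def z_def by (simp add: algebra_simps)
  have r3: "Gamma (1 + \<i> * complex_of_real (x/2)) = A" unfolding A_def z_def by (simp add: add.commute)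
  have r4: "pochhammer (complex_of_real (1/2) + \<i> * complex_of_real (x/2)) (2*n+p) = P2"
    unfolding P2_def z_def by (simp add: add.commute)
  have rhs: "G_even n p x = - \<i> * 2 powr of_nat (2*n+1) * K * A * P1 / (of_real (sqrt pi) * B * P2)"
    unfolding G_even_def r1 r2 r3 r4 K_def ..
  have sp: "complex_of_real (sqrt pi) \<noteq> 0" by simp
  show ?thesis unfolding lhs rhs g2 Gm' pw' fx
    using E0 A0 B0 P10 P20 z0 sp by (simp add: field_simps)
qed


lemma isCont_poch' [continuous_intros]:
  "isCont (f :: real \<Rightarrow> complex) z \<Longrightarrow> isCont (\<lambda>x. pochhammer (f x) n) z"
  using isCont_o2[where f=f and a=z and g="\<lambda>w. pochhammer w n"] isCont_pochhammer by blast

lemma Gamma_line_nz: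
  assumes "c \<notin> \<int>\<^sub>\<le>\<^sub>0"
  shows "Gamma (complex_of_real c + \<i> * of_real y) \<noteq> 0"
  using imag_not_nonpos_int[of c y] assms by (simp add: Gamma_eq_zero_iff)

lemma half_not_npi: "(1/2::real) \<notin> \<int>\<^sub>\<le>\<^sub>0"
  using fraction_not_in_Ints[of 2 1, where 'a=real] nonpos_Ints_subset_Ints by auto

lemma one_not_npi: "(1::real) \<notin> \<int>\<^sub>\<le>\<^sub>0"
  by (auto elim!: nonpos_Ints_cases)

lemma nzA: "Gamma (1 + \<i> * complex_of_real y) \<noteq> 0"
  using Gamma_line_nz[OF one_not_npi, of y] by simp

lemma nzB: "Gamma (1/2 + \<i> * complex_of_real y) \<noteq> 0"
  using Gamma_line_nz[OF half_not_npi, of y] by simp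

lemma K_nz: "n \<ge> 1 \<Longrightarrow> Gamma (of_nat (2*n+1) - 1 :: complex) \<noteq> 0"
proof -
  assume n: "n \<ge> 1"
  have e: "(of_nat (2*n+1) - 1 :: complex) = of_nat (2*n)" by simp
  have "(of_nat (2*n) :: complex) \<notin> \<int>\<^sub>\<le>\<^sub>0" using n unfolding of_nat_in_nonpos_Ints_iff by simp
  then show ?thesis unfolding e by (simp add: Gamma_eq_zero_iff)
qed

lemma pw_nz: "(2::complex) powr w \<noteq> 0"
  by (simp add: powr_def)

lemma c0_pos: "n \<ge> 1 \<Longrightarrow> norm ((2::complex) powr of_nat (2*n+1)) * norm (Gamma (of_nat (2*n+1) - 1 :: complex)) / (2 * sqrt pi) > 0"
  using K_nz[of n] pw_nz by simp

lemma poch_nz: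
  assumes "\<forall>j<k. c + real j \<noteq> 0"
  shows "pochhammer (complex_of_real c + \<i> * of_real (x/2)) k \<noteq> 0"
  using bnd_pos[OF bnd_poch[OF assms], of x] by auto

lemma bnd_G_odd:
  assumes n: "n \<ge> 1" and p: "p \<ge> 1"
  shows "bnd (\<lambda>x. norm (G_odd n p x)) (1/4 - real n)"
proof -
  define c0 where "c0 = norm ((2::complex) powr of_nat (2*n+1)) * norm (Gamma (of_nat (2*n+1) - 1 :: complex)) / (2 * sqrt pi)"
  have c0: "c0 > 0" unfolding c0_def using c0_pos[OF n] .
  have h1: "\<forall>j<p. - real p + real j \<noteq> 0" by auto
  have h2: "\<forall>j<2*n+p-1. (1::real) + real j \<noteq> 0" by auto
  have b: "bnd (\<lambda>x. c0 * (inverse (Rg x) * (norm (pochhammer (complex_of_real (- real p) + \<i> * of_real (x/2)) p) *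
              inverse (norm (pochhammer (complex_of_real 1 + \<i> * of_real (x/2)) (2*n+p-1))))))
           (0 + (- (1/4) + (real p / 2 + - (real (2*n+p-1) / 2))))"
    by (intro bnd_mult bnd_const c0 bnd_inverse bnd_Rg bnd_poch h1 h2)
  show ?thesis
  proof (rule bnd_cong[OF b])
    fix x
    show "c0 * (inverse (Rg x) * (norm (pochhammer (complex_of_real (- real p) + \<i> * of_real (x/2)) p) *
              inverse (norm (pochhammer (complex_of_real 1 + \<i> * of_real (x/2)) (2*n+p-1))))) = norm (G_odd n p x)"
      unfolding G_odd_def Rg_def c0_def using nzA[of "x/2"] nzB[of "x/2"]
      by (simp add: norm_mult norm_divide field_simps)
  next
    show "0 + (- (1/4) + (real p / 2 + - (real (2*n+p-1) / 2))) = 1/4 - real n"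
      using p by (simp add: of_nat_diff field_simps)
  qed
qed

lemma bnd_G_even:
  assumes n: "n \<ge> 1"
  shows "bnd (\<lambda>x. norm (G_even n p x)) (3/4 - real n)"
proof -
  define c0 where "c0 = norm ((2::complex) powr of_nat (2*n+1)) * norm (Gamma (of_nat (2*n+1) - 1 :: complex)) / (2 * sqrt pi)"
  have c0: "2 * c0 > 0" unfolding c0_def using c0_pos[OF n] by simp
  have h1: "\<forall>j<Suc p. - 1/2 - real p + real j \<noteq> 0"
  proof (intro allI impI)
    fix j assume "j < Suc p"
    show "- 1/2 - real p + real j \<noteq> 0"
    proof
      assume "- 1/2 - real p + real j = 0"
      then have "2 * (real j - real p) = 1" by simp
      then have "real_of_int (2 * (int j - int p)) = real_of_int 1" by simp
      then have "2 * (int j - int p) = 1" by (simp only: of_int_eq_iff)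
      then show False by presburger
    qed
  qed
  have h2: "\<forall>j<2*n+p. (1/2::real) + real j \<noteq> 0" by auto
  have b: "bnd (\<lambda>x. (2 * c0) * (Rg x * (norm (pochhammer (complex_of_real (- 1/2 - real p) + \<i> * of_real (x/2)) (Suc p)) *
              inverse (norm (pochhammer (complex_of_real (1/2) + \<i> * of_real (x/2)) (2*n+p))))))
           (0 + (1/4 + (real (Suc p) / 2 + - (real (2*n+p) / 2))))"
    by (intro bnd_mult bnd_const c0 bnd_inverse bnd_Rg bnd_poch h1 h2)
  show ?thesis
  proof (rule bnd_cong[OF b])
    fix x
    show "(2 * c0) * (Rg x * (norm (pochhammer (complex_of_real (- 1/2 - real p) + \<i> * of_real (x/2)) (Suc p)) *
              inverse (norm (pochhammer (complex_of_real (1/2) + \<i> * of_real (x/2)) (2*n+p))))) = norm (G_even n p x)"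
      unfolding G_even_def Rg_def c0_def using nzA[of "x/2"] nzB[of "x/2"]
      by (simp add: norm_mult norm_divide field_simps)
  next
    show "0 + (1/4 + (real (Suc p) / 2 + - (real (2*n+p) / 2))) = 3/4 - real n"
      by (simp add: field_simps)
  qed
qed

lemma b_fun_eq:
  assumes eq: "\<And>x. x \<noteq> 0 \<Longrightarrow> b_raw rho nu x = G x" and c: "isCont G 0"
  shows "b_fun rho nu x = G x"
proof (cases "x = 0")
  case False
  then show ?thesis unfolding b_fun_def using eq by simp
next
  case True
  have ev: "eventually (\<lambda>y. G y = b_raw rho nu y) (at (0::real))"
    unfolding eventually_at_filter using eq by (intro always_eventually) auto
  have "(G \<longlongrightarrow> G 0) (at 0)" using c by (simp add: isCont_def)
  then have "(b_raw rho nu \<longlongrightarrow> G 0) (at 0)" using tendsto_cong[OF ev] by simp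
  then have "Lim (at (0::real)) (b_raw rho nu) = G 0" by (rule tendsto_Lim[OF trivial_limit_at])
  then show ?thesis unfolding b_fun_def using True by simp
qed

lemma isCont_G_odd:
  assumes n: "n \<ge> 1" and p: "p \<ge> 1"
  shows "isCont (G_odd n p) 0"
proof -
  have d: "2 * complex_of_real (sqrt pi) * Gamma (1 + \<i> * of_real (0/2)) * pochhammer (1 + \<i> * of_real (0/2)) (2*n+p-1) \<noteq> 0"
    using poch_nz[of "2*n+p-1" 1 0] nzA[of 0] by simp
  have g: "1 + \<i> * complex_of_real (0/2) \<notin> \<int>\<^sub>\<le>\<^sub>0" "1/2 + \<i> * complex_of_real (0/2) \<notin> \<int>\<^sub>\<le>\<^sub>0"
    using imag_not_nonpos_int[OF disjI1[OF one_not_npi], of 0] imag_not_nonpos_int[OF disjI1[OF half_not_npi], of 0] by simp_all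
  show ?thesis unfolding G_odd_def
    using d g by (intro continuous_intros) auto
qed

lemma isCont_G_even:
  assumes n: "n \<ge> 1"
  shows "isCont (G_even n p) 0"
proof -
  have h2: "\<forall>j<2*n+p. (1/2::real) + real j \<noteq> 0" by auto
  have d: "complex_of_real (sqrt pi) * Gamma (1/2 + \<i> * of_real (0/2)) * pochhammer (complex_of_real (1/2) + \<i> * of_real (0/2)) (2*n+p) \<noteq> 0"
    using poch_nz[OF h2, of 0] nzB[of 0] by simp
  have g: "1 + \<i> * complex_of_real (0/2) \<notin> \<int>\<^sub>\<le>\<^sub>0" "1/2 + \<i> * complex_of_real (0/2) \<notin> \<int>\<^sub>\<le>\<^sub>0"
    using imag_not_nonpos_int[OF disjI1[OF one_not_npi], of 0] imag_not_nonpos_int[OF disjI1[OF half_not_npi], of 0] by simp_all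
  show ?thesis unfolding G_even_def
    using d g by (intro continuous_intros) auto
qed


lemma finish:
  assumes eq: "\<And>x. b_fun rho nu x = G x" and b: "bnd (\<lambda>x. norm (G x)) e"
    and ex: "(2 * real rho - 4 - eps_nu rho nu) / 4 = - e"
  shows "(\<forall>lam::real. b_fun rho nu lam \<noteq> 0) \<and>
    (\<exists>C::real. C > 0 \<and> (\<forall>lam::real.
       inverse C * (1 + lam^2) powr ((2 * real rho - 4 - eps_nu rho nu) / 4)
         \<le> inverse (norm (b_fun rho nu lam)) \<and>
       inverse (norm (b_fun rho nu lam))
         \<le> C * (1 + lam^2) powr ((2 * real rho - 4 - eps_nu rho nu) / 4)))"
proof
  show "\<forall>lam::real. b_fun rho nu lam \<noteq> 0"
    using bnd_pos[OF b] eq by (metis norm_zero order_less_irrefl)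
  have "bnd (\<lambda>x. inverse (norm (b_fun rho nu x))) (- e)"
    using bnd_inverse[OF b] eq by simp
  then show "\<exists>C::real. C > 0 \<and> (\<forall>lam::real.
       inverse C * (1 + lam^2) powr ((2 * real rho - 4 - eps_nu rho nu) / 4)
         \<le> inverse (norm (b_fun rho nu lam)) \<and>
       inverse (norm (b_fun rho nu lam))
         \<le> C * (1 + lam^2) powr ((2 * real rho - 4 - eps_nu rho nu) / 4))"
    unfolding bnd_def ex .
qed

theorem mainTheorem7:
  fixes n rho :: nat and nu :: int
  assumes "n \<ge> 1" and "rho = 2 * n + 1" and "nu > int rho - 2"
  shows "(\<forall>lam::real. b_fun rho nu lam \<noteq> 0) \<and>
    (\<exists>C::real. C > 0 \<and> (\<forall>lam::real.
       inverse C * (1 + lam^2) powr ((2 * real rho - 4 - eps_nu rho nu) / 4)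
         \<le> inverse (norm (b_fun rho nu lam)) \<and>
       inverse (norm (b_fun rho nu lam))
         \<le> C * (1 + lam^2) powr ((2 * real rho - 4 - eps_nu rho nu) / 4)))"
proof -
  note n = assms(1) and rho = assms(2)
  have nu: "nu \<ge> 2 * int n" using assms(2,3) by simp
  show ?thesis
  proof (cases "even (nu - 2 * int n)")
    case True
    define p where "p = nat ((nu - 2 * int n) div 2)"
    have d: "(nu - 2 * int n) mod 2 = 0" using True by (simp add: even_iff_mod_2_eq_zero)
    have ip: "int p = (nu - 2 * int n) div 2" unfolding p_def using nu by simp
    have nup: "nu = 2 * int n + 2 * int p" unfolding ip using d by presburger
    have hs: "\<not> half_shift_nonneg_int rho nu"
      unfolding half_shift_nonneg_int_def rho nup by presburger
    have eps: "eps_nu rho nu = 1" unfolding eps_nu_def using hs by simp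
    have eq: "b_fun rho nu x = G_even n p x" for x
    proof (rule b_fun_eq)
      fix x :: real assume "x \<noteq> 0"
      then show "b_raw rho nu x = G_even n p x"
        unfolding b_raw_def using hs even_eq[OF n, of x p] unfolding rho nup by simp
    next
      show "isCont (G_even n p) 0" by (rule isCont_G_even[OF n])
    qed
    show ?thesis
      by (rule finish[OF eq bnd_G_even[OF n]]) (unfold eps, simp add: rho field_simps)
  next
    case False
    define p where "p = nat ((nu - 2 * int n + 1) div 2)"
    have d: "(nu - 2 * int n) mod 2 = 1" using False by (simp add: not_mod_2_eq_0_eq_1 even_iff_mod_2_eq_zero)
    have ip: "int p = (nu - 2 * int n + 1) div 2" unfolding p_def using nu by simp
    have nup: "nu = 2 * int n + 2 * int p - 1" unfolding ip using d by presburger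
    have "int p \<ge> 1" unfolding ip using d nu by presburger
    then have p1: "p \<ge> 1" by simp
    have hs: "half_shift_nonneg_int rho nu"
      unfolding half_shift_nonneg_int_def rho nup by (rule exI[of _ p]) simp
    have eps: "eps_nu rho nu = -1" unfolding eps_nu_def using hs by simp
    have eq: "b_fun rho nu x = G_odd n p x" for x
    proof (rule b_fun_eq)
      fix x :: real assume "x \<noteq> 0"
      then show "b_raw rho nu x = G_odd n p x"
        unfolding b_raw_def using hs odd_eq[OF n p1, of x] unfolding rho nup by simp
    next
      show "isCont (G_odd n p) 0" by (rule isCont_G_odd[OF n p1])
    qed
    show ?thesis
      by (rule finish[OF eq bnd_G_odd[OF n p1]]) (unfold eps, simp add: rho field_simps)
  qed
qed

end
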